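(* Let $A$ be a unital $C^*$-algebra and let $a,b\in A$ be unitary. Then $a=b$ if and only if $\rho(a,b)=0$.
   Context: For $a,b\in A$ and $n\geq 0$ put $C_{a,b}^n\mathbf 1=\sum_{k=0}^n(-1)^k\binom{n}{k}a^{n-k}b^k$ (with $a^0=b^0=\mathbf 1$), and $\rho(a,b)=\limsup_{n\to\infty}\|C_{a,b}^n\mathbf 1\|^{1/n}$. *)

theory Defs
  imports "HOL-Analysis.Analysis" "HOL-Library.Liminf_Limsup"
begin

text \<open>The library has no complex vector spaces other than
  via scalar multiplication by reals, so complex scalar multiplication and the involution
  are added as class parameters together with the C*-algebra axioms.\<close>

class cstar_algebra = real_normed_algebra_1 + banach +
  fixes scaleC :: "complex \<Rightarrow> 'a \<Rightarrow> 'a"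
    and invol :: "'a \<Rightarrow> 'a"
  assumes scaleC_of_real: "scaleC (complex_of_real r) x = scaleR r x"
    and scaleC_add_left: "scaleC (c + d) x = scaleC c x + scaleC d x"
    and scaleC_add_right: "scaleC c (x + y) = scaleC c x + scaleC c y"
    and scaleC_mult: "scaleC (c * d) x = scaleC c (scaleC d x)"
    and scaleC_one: "scaleC 1 x = x"
    and norm_scaleC: "norm (scaleC c x) = cmod c * norm x"
    and scaleC_mult_left: "scaleC c (x * y) = scaleC c x * y"
    and scaleC_mult_right: "scaleC c (x * y) = x * scaleC c y"
    and invol_invol: "invol (invol x) = x"
    and invol_add: "invol (x + y) = invol x + invol y"
    and invol_scaleC: "invol (scaleC c x) = scaleC (cnj c) (invol x)"
    and invol_mult: "invol (x * y) = invol y * invol x"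
    and cstar_identity: "norm (invol x * x) = (norm x)\<^sup>2"

definition unitary :: "'a::cstar_algebra \<Rightarrow> bool" where
  "unitary u \<longleftrightarrow> invol u * u = 1 \<and> u * invol u = 1"

definition Cab :: "'a::cstar_algebra \<Rightarrow> 'a \<Rightarrow> nat \<Rightarrow> 'a" where
  "Cab a b n = (\<Sum>k\<le>n. ((-1) ^ k * of_nat (n choose k)) * a ^ (n - k) * b ^ k)"

definition rho :: "'a::cstar_algebra \<Rightarrow> 'a \<Rightarrow> ereal" where
  "rho a b = limsup (\<lambda>n. ereal (root n (norm (Cab a b n))))"

end

theory Submission
  imports Defs
begin

lemma scaleC_zero_right [simp]: "scaleC c (0::'a::cstar_algebra) = 0"
  using scaleC_add_right[of c "0::'a" 0] by simp

lemma scaleC_zero_left [simp]: "scaleC 0 (x::'a::cstar_algebra) = 0"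
  using scaleC_of_real[of 0 x] by simp

lemma scaleC_minus_right: "scaleC c (- (x::'a::cstar_algebra)) = - scaleC c x"
  using scaleC_add_right[of c x "-x"] by (simp add: eq_neg_iff_add_eq_0 add.commute)

lemma scaleC_diff_right: "scaleC c ((x::'a::cstar_algebra) - y) = scaleC c x - scaleC c y"
  using scaleC_add_right[of c x "-y"] by (simp add: scaleC_minus_right)

lemma scaleC_scaleR: "scaleC c (r *\<^sub>R (x::'a::cstar_algebra)) = r *\<^sub>R scaleC c x"
  by (metis mult.commute scaleC_mult scaleC_of_real)

lemma bounded_linear_scaleC: "bounded_linear (scaleC c :: 'a::cstar_algebra \<Rightarrow> 'a)"
proof (rule bounded_linear_intro[where K="cmod c"])
  show "\<And>x y. scaleC c (x + y) = scaleC c x + scaleC c (y::'a)" by (rule scaleC_add_right)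
  show "\<And>r x. scaleC c (r *\<^sub>R x) = r *\<^sub>R scaleC c (x::'a)" by (rule scaleC_scaleR)
  show "\<And>x. norm (scaleC c (x::'a)) \<le> norm x * cmod c" by (simp add: norm_scaleC)
qed

lemma scaleC_sum_right: "scaleC c (\<Sum>i\<in>I. f i) = (\<Sum>i\<in>I. scaleC c (f i :: 'a::cstar_algebra))"
  by (induction I rule: infinite_finite_induct) (auto simp: scaleC_add_right)

lemma scaleC_sum_left: "scaleC (\<Sum>i\<in>I. f i) (x::'a::cstar_algebra) = (\<Sum>i\<in>I. scaleC (f i) x)"
  by (induction I rule: infinite_finite_induct) (auto simp: scaleC_add_left)

lemma scaleC_suminf: "summable f \<Longrightarrow> scaleC c (suminf f) = (\<Sum>n. scaleC c (f n :: 'a::cstar_algebra))"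
  using bounded_linear.suminf[OF bounded_linear_scaleC] by metis

lemma norm_unitary: assumes "unitary u" shows "norm u = 1"
proof -
  have "(norm u)^2 = 1" using cstar_identity[of u] assms by (simp add: unitary_def)
  thus ?thesis by (simp add: power2_eq_1_iff) (smt (verit) norm_ge_zero)
qed

lemma unitary_invol: "unitary u \<Longrightarrow> unitary (invol u)"
  by (simp add: unitary_def invol_invol)

definition cr :: "nat \<Rightarrow> nat \<Rightarrow> real" where "cr n k = (-1)^k * real (n choose k)"

lemma cr_Suc: "cr (Suc n) (Suc k) = cr n (Suc k) - cr n k"
  by (simp add: cr_def algebra_simps)

lemma Cab_alt: "Cab a b n = (\<Sum>k\<le>n. cr n k *\<^sub>R (a ^ (n - k) * b ^ k))"
  unfolding Cab_def cr_def
  by (intro sum.cong refl) (simp add: scaleR_conv_of_real mult.assoc)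

lemma Cab_0: "Cab a b 0 = 1" by (simp add: Cab_def)

lemma Cab_Suc: "Cab a b (Suc n) = a * Cab a b n - Cab a b n * b"
proof -
  define X where "X k = a ^ (Suc n - k) * b ^ k" for k
  have "Cab a b (Suc n) = (\<Sum>k\<le>Suc n. cr (Suc n) k *\<^sub>R X k)"
    by (simp add: Cab_alt X_def)
  also have "\<dots> = cr (Suc n) 0 *\<^sub>R X 0 + (\<Sum>k\<le>n. cr (Suc n) (Suc k) *\<^sub>R X (Suc k))"
    by (subst sum.atMost_Suc_shift) simp
  also have "(\<Sum>k\<le>n. cr (Suc n) (Suc k) *\<^sub>R X (Suc k))
      = (\<Sum>k\<le>n. cr n (Suc k) *\<^sub>R X (Suc k)) - (\<Sum>k\<le>n. cr n k *\<^sub>R X (Suc k))"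
    by (simp only: sum_subtractf[symmetric] cr_Suc scaleR_diff_left)
  also have "cr (Suc n) 0 *\<^sub>R X 0 + ((\<Sum>k\<le>n. cr n (Suc k) *\<^sub>R X (Suc k)) - (\<Sum>k\<le>n. cr n k *\<^sub>R X (Suc k)))
     = (cr n 0 *\<^sub>R X 0 + (\<Sum>k\<le>n. cr n (Suc k) *\<^sub>R X (Suc k))) - (\<Sum>k\<le>n. cr n k *\<^sub>R X (Suc k))"
    by (simp add: cr_def)
  also have "cr n 0 *\<^sub>R X 0 + (\<Sum>k\<le>n. cr n (Suc k) *\<^sub>R X (Suc k)) = (\<Sum>k\<le>Suc n. cr n k *\<^sub>R X k)"
    by (subst sum.atMost_Suc_shift) simp
  also have "\<dots> = (\<Sum>k\<le>n. cr n k *\<^sub>R X k)"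
    by (simp add: cr_def)
  also have "\<dots> = a * Cab a b n"
    unfolding Cab_alt sum_distrib_left X_def
    by (intro sum.cong refl) (simp add: Suc_diff_le mult.assoc)
  also have "(\<Sum>k\<le>n. cr n k *\<^sub>R X (Suc k)) = Cab a b n * b"
    unfolding Cab_alt sum_distrib_right X_def
    by (intro sum.cong refl) (simp add: mult.assoc power_commutes)
  finally show ?thesis .
qed


definition vv :: "'a::cstar_algebra \<Rightarrow> 'a \<Rightarrow> nat \<Rightarrow> 'a" where
  "vv a b n = Cab a b n * invol b ^ n"

lemma vv_0: "vv a b 0 = 1" by (simp add: vv_def Cab_0)

lemma vv_Suc: assumes "unitary b" shows "vv a b (Suc n) = a * vv a b n * invol b - vv a b n"
proof -
  have bb: "b * invol b = 1" using assms by (simp add: unitary_def)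
  have "vv a b (Suc n) = a * Cab a b n * (invol b ^ n * invol b) - Cab a b n * b * (invol b * invol b ^ n)"
    unfolding vv_def Cab_Suc by (simp add: left_diff_distrib power_Suc2[symmetric] del: power_Suc2)
  also have "Cab a b n * b * (invol b * invol b ^ n) = Cab a b n * invol b ^ n"
    by (simp add: mult.assoc[symmetric]) (simp add: mult.assoc bb)
  finally show ?thesis by (simp add: vv_def mult.assoc)
qed

lemma vv_1: assumes "unitary b" shows "vv a b 1 = a * invol b - 1"
  using vv_Suc[OF assms, of a 0] by (simp add: vv_0)

lemma norm_unitary_power: "unitary u \<Longrightarrow> norm (u ^ n) \<le> 1"
  by (metis norm_power_ineq norm_unitary power_one)

lemma norm_vv: assumes "unitary b" shows "norm (vv a b n) \<le> norm (Cab a b n)"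
proof -
  have "norm (vv a b n) \<le> norm (Cab a b n) * norm (invol b ^ n)"
    unfolding vv_def by (rule norm_mult_ineq)
  also have "\<dots> \<le> norm (Cab a b n)"
    using norm_unitary_power[OF unitary_invol[OF assms], of n]
    by (simp add: mult_left_le)
  finally show ?thesis .
qed

lemma norm_sandwich: assumes "unitary a" "unitary b"
  shows "norm (a * y * invol b) = norm y"
proof (rule antisym)
  show "norm (a * y * invol b) \<le> norm y"
    using norm_mult_ineq[of "a*y" "invol b"] norm_mult_ineq[of a y]
      norm_unitary[OF assms(1)] norm_unitary[OF unitary_invol[OF assms(2)]] by simp
  have "y = invol a * (a * y * invol b) * b"
    using assms by (simp add: unitary_def mult.assoc[symmetric]) (simp add: mult.assoc)
  hence "norm y \<le> norm (invol a) * norm (a * y * invol b) * norm b"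
    by (metis norm_mult_ineq mult_right_mono norm_ge_zero order_trans)
  thus "norm y \<le> norm (a * y * invol b)"
    using norm_unitary[OF assms(2)] norm_unitary[OF unitary_invol[OF assms(1)]] by simp
qed


context
  fixes a b :: "'a::cstar_algebra"
  assumes ua: "unitary a" and ub: "unitary b" and rho0: "rho a b = 0"
begin

lemma summ_vv: assumes "0 \<le> R" shows "summable (\<lambda>n. R ^ n * norm (vv a b n))"
proof -
  define q where "q = 1 / (2 * (R + 1))"
  have q: "q > 0" "R * q \<le> 1/2" using assms by (auto simp: q_def field_simps)
  have "eventually (\<lambda>n. ereal (root n (norm (Cab a b n))) < ereal q) sequentially"
    by (rule Limsup_lessD) (use rho0 q in \<open>simp add: rho_def\<close>)
  hence ev: "eventually (\<lambda>n. root n (norm (Cab a b n)) < q \<and> n > 0) sequentially"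
    using eventually_gt_at_top[of 0] by eventually_elim auto
  show ?thesis
  proof (rule summable_comparison_test_ev[where g="\<lambda>n. (1/2)^n"])
    show "eventually (\<lambda>n. norm (R ^ n * norm (vv a b n)) \<le> (1/2)^n) sequentially"
      using ev
    proof eventually_elim
      case (elim n)
      have "norm (Cab a b n) = root n (norm (Cab a b n)) ^ n" using elim by simp
      also have "\<dots> \<le> q ^ n" using elim by (intro power_mono) auto
      finally have "norm (vv a b n) \<le> q ^ n" using norm_vv[OF ub, of a n] by linarith
      hence "R ^ n * norm (vv a b n) \<le> R ^ n * q ^ n" using assms by (intro mult_left_mono) auto
      also have "\<dots> = (R * q) ^ n" by (simp add: power_mult_distrib)
      also have "\<dots> \<le> (1/2)^n" using q assms by (intro power_mono) auto
      finally show ?case using assms by simp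
    qed
  qed simp
qed

lemma summ_term: "summable (\<lambda>n. scaleC (c * s ^ n) (vv a b n))"
proof (rule summable_norm_cancel)
  have "summable (\<lambda>n. cmod c * (cmod s ^ n * norm (vv a b n)))"
    by (intro summable_mult summ_vv) auto
  thus "summable (\<lambda>n. norm (scaleC (c * s ^ n) (vv a b n)))"
    by (simp add: norm_scaleC norm_mult norm_power mult.assoc)
qed

definition Phi :: "complex \<Rightarrow> 'a" where
  "Phi s = (\<Sum>n. scaleC (s ^ n) (vv a b n))"

lemma summ_Phi: "summable (\<lambda>n. scaleC (s ^ n) (vv a b n))"
  using summ_term[of 1 s] by simp

lemma summ_shift: "summable (\<lambda>n. scaleC (c * s ^ n) (vv a b (n + k)))"
proof (rule summable_norm_cancel)
  define R where "R = cmod s + 1"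
  have R: "R > 0" "cmod s \<le> R" unfolding R_def using norm_ge_zero[of s] by linarith+
  have "summable (\<lambda>n. R ^ (n + k) * norm (vv a b (n + k)))"
    using summ_vv[of R] R summable_iff_shift[of "\<lambda>n. R ^ n * norm (vv a b n)" k] by simp
  hence "summable (\<lambda>n. (R ^ (n + k) * norm (vv a b (n + k))) / R ^ k)"
    by (rule summable_divide)
  hence s1: "summable (\<lambda>n. R ^ n * norm (vv a b (n + k)))"
    using R by (simp add: power_add)
  have "summable (\<lambda>n. cmod s ^ n * norm (vv a b (n + k)))"
    by (rule summable_comparison_test[OF _ s1])
       (auto intro!: exI[of _ 0] mult_right_mono power_mono R)
  hence "summable (\<lambda>n. cmod c * (cmod s ^ n * norm (vv a b (n + k))))"
    by (rule summable_mult)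
  thus "summable (\<lambda>n. norm (scaleC (c * s ^ n) (vv a b (n + k))))"
    by (simp add: norm_scaleC norm_mult norm_power mult.assoc)
qed

lemma Phi_identity: "scaleC (1 + s) (Phi s) - scaleC s (a * Phi s * invol b) = 1"
proof -
  let ?f = "\<lambda>n. scaleC (s ^ n) (vv a b n)"
  let ?g = "\<lambda>n. scaleC (s ^ n) (vv a b (Suc n))"
  have bl: "bounded_linear (\<lambda>y. a * y * invol b)"
    by (intro bounded_linear_compose[OF bounded_linear_mult_left] bounded_linear_mult_right)
  have sg: "summable ?g" using summ_shift[of 1 s 1] by simp
  have "a * Phi s * invol b = (\<Sum>n. a * ?f n * invol b)"
    unfolding Phi_def using bounded_linear.suminf[OF bl summ_Phi[of s]] by simp
  also have "\<dots> = (\<Sum>n. ?g n + ?f n)"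
    by (intro suminf_cong) (simp add: vv_Suc[OF ub] scaleC_mult_left[symmetric] scaleC_mult_right[symmetric] scaleC_diff_right)
  also have "\<dots> = suminf ?g + Phi s"
    unfolding Phi_def by (rule suminf_add[symmetric, OF sg summ_Phi])
  finally have 1: "a * Phi s * invol b = suminf ?g + Phi s" .
  have "scaleC s (suminf ?g) = (\<Sum>n. scaleC s (?g n))" by (rule scaleC_suminf[OF sg])
  also have "\<dots> = (\<Sum>n. ?f (Suc n))"
    by (intro suminf_cong) (simp add: scaleC_mult[symmetric])
  also have "\<dots> = Phi s - 1"
    unfolding Phi_def by (subst suminf_split_head[OF summ_Phi]) (simp add: vv_0 scaleC_one)
  finally have 2: "scaleC s (suminf ?g) = Phi s - 1" .
  have "scaleC (1 + s) (Phi s) - scaleC s (a * Phi s * invol b)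
      = Phi s + scaleC s (Phi s) - (scaleC s (suminf ?g) + scaleC s (Phi s))"
    by (simp add: 1 scaleC_add_left scaleC_add_right scaleC_one)
  also have "\<dots> = 1" by (simp add: 2)
  finally show ?thesis .
qed

lemma Phi_bound: "cmod (1 + s + cnj s) * norm (Phi s) \<le> cmod (1 + s) + cmod s"
proof -
  define N where "N = norm (Phi s)"
  have SN: "norm (a * Phi s * invol b) = N" unfolding N_def by (rule norm_sandwich[OF ua ub])
  have e1: "scaleC (1 + s) (Phi s) = 1 + scaleC s (a * Phi s * invol b)"
    using Phi_identity[of s] by (simp add: algebra_simps)
  have e2: "scaleC s (a * Phi s * invol b) = scaleC (1 + s) (Phi s) - 1"
    using Phi_identity[of s] by (simp add: algebra_simps)
  have i1: "cmod (1 + s) * N \<le> 1 + cmod s * N"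
    using norm_triangle_ineq[of 1 "scaleC s (a * Phi s * invol b)"] e1
    by (metis N_def SN norm_one norm_scaleC)
  have i2: "cmod s * N \<le> cmod (1 + s) * N + 1"
    using norm_triangle_ineq4[of "scaleC (1 + s) (Phi s)" 1] e2
    by (metis N_def SN norm_one norm_scaleC)
  have N0: "N \<ge> 0" by (simp add: N_def)
  have "\<bar>cmod (1 + s) - cmod s\<bar> * N \<le> 1" using i1 i2 by (auto simp: abs_if algebra_simps)
  have eq: "cmod (1 + s + cnj s) = \<bar>(cmod (1 + s))^2 - (cmod s)^2\<bar>"
  proof -
    have "1 + s + cnj s = complex_of_real (1 + 2 * Re s)"
      by (simp add: complex_eq_iff)
    hence "cmod (1 + s + cnj s) = \<bar>1 + 2 * Re s\<bar>" by (simp only: norm_of_real)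
    moreover have "(cmod (1 + s))^2 - (cmod s)^2 = 1 + 2 * Re s"
      unfolding cmod_power2 by (simp add: power2_eq_square algebra_simps)
    ultimately show ?thesis by simp
  qed
  have pq: "\<bar>(cmod (1 + s))^2 - (cmod s)^2\<bar> = (cmod (1 + s) + cmod s) * \<bar>cmod (1 + s) - cmod s\<bar>"
  proof -
    have "(cmod (1 + s))^2 - (cmod s)^2 = (cmod (1 + s) + cmod s) * (cmod (1 + s) - cmod s)"
      by (simp add: power2_eq_square algebra_simps)
    thus ?thesis by (simp add: abs_mult)
  qed
  have "\<bar>(cmod (1 + s))^2 - (cmod s)^2\<bar> * N
        = (cmod (1 + s) + cmod s) * (\<bar>cmod (1 + s) - cmod s\<bar> * N)"
    by (simp add: pq)
  also have "\<dots> \<le> (cmod (1 + s) + cmod s) * 1"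
    by (intro mult_left_mono) (use \<open>\<bar>cmod (1 + s) - cmod s\<bar> * N \<le> 1\<close> in auto)
  finally show ?thesis by (simp add: eq N_def)
qed

lemma root_sum:
  assumes "M > 0"
  shows "(\<Sum>j<M. exp (2 * of_real pi * \<i> / of_nat M) ^ (j * q)) = (if M dvd q then of_nat M else 0)"
proof -
  define w where "w = exp (2 * of_real pi * \<i> * of_nat q / of_nat M)"
  have wq: "exp (2 * of_real pi * \<i> / of_nat M) ^ q = w"
    unfolding w_def exp_of_nat_mult[symmetric] by (simp add: field_simps)
  have pw: "exp (2 * of_real pi * \<i> / of_nat M) ^ (j * q) = w ^ j" for j
    by (simp add: wq[symmetric] power_mult[symmetric] mult.commute)
  have w1: "w = 1 \<longleftrightarrow> M dvd q" unfolding w_def using assms by (intro complex_root_unity_eq_1) auto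
  have wM: "w ^ M = 1" unfolding w_def using assms by (intro complex_root_unity) auto
  show ?thesis
  proof (cases "M dvd q")
    case True thus ?thesis using w1 by (simp add: pw)
  next
    case False
    hence "w \<noteq> 1" using w1 by simp
    hence "(\<Sum>j<M. w ^ j) = (w ^ M - 1) / (w - 1)" by (rule geometric_sum)
    thus ?thesis using False wM by (simp add: pw)
  qed
qed

lemma key_bound:
  assumes R: "R \<ge> 1"
  shows "norm (1 + scaleC (of_real (R^2)) (vv a b 1)) \<le> 2 * (2 * R + 1)"
proof -
  define f where "f n = R ^ n * norm (vv a b n)" for n
  have sf: "summable f" unfolding f_def using R by (intro summ_vv) auto
  obtain N where N: "\<And>n. n \<ge> N \<Longrightarrow> norm (\<Sum>i. f (i + n)) < 1"
    using suminf_exist_split[OF _ sf, of 1] by auto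
  define M where "M = N + 3"
  have M3: "M \<ge> 3" by (simp add: M_def)
  define k where "k = M - 1"
  have kN: "k \<ge> N" by (simp add: k_def M_def)
  define z :: complex where "z = exp (2 * of_real pi * \<i> / of_nat M)"
  define g where "g q = (\<Sum>j<M. z ^ (j * q))" for q
  have g: "g q = (if M dvd q then of_nat M else 0)" for q
    unfolding g_def z_def using M3 by (intro root_sum) auto
  define sj where "sj j = of_real R * z ^ j" for j
  define G where "G p = (\<Sum>j<M. scaleC (z ^ (j * p)) (Phi (sj j)))" for p
  have G_eq: "G p = (\<Sum>n. scaleC (of_real R ^ n * g (n + p)) (vv a b n))" for p
  proof -
    have "G p = (\<Sum>j<M. \<Sum>n. scaleC (z ^ (j * p) * sj j ^ n) (vv a b n))"
      unfolding G_def Phi_def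
      by (intro sum.cong refl) (simp add: scaleC_suminf[OF summ_Phi] scaleC_mult)
    also have "\<dots> = (\<Sum>n. \<Sum>j<M. scaleC (z ^ (j * p) * sj j ^ n) (vv a b n))"
      by (rule suminf_sum[symmetric]) (rule summ_term)
    also have "\<dots> = (\<Sum>n. scaleC (of_real R ^ n * g (n + p)) (vv a b n))"
    proof (intro suminf_cong)
      fix n
      have "(\<Sum>j<M. z ^ (j * p) * sj j ^ n) = of_real R ^ n * g (n + p)"
        unfolding g_def sj_def sum_distrib_left
        by (intro sum.cong refl) (simp add: power_mult_distrib power_mult[symmetric] power_add[symmetric]
              algebra_simps)
      thus "(\<Sum>j<M. scaleC (z ^ (j * p) * sj j ^ n) (vv a b n)) = scaleC (of_real R ^ n * g (n + p)) (vv a b n)"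
        by (simp add: scaleC_sum_left[symmetric])
    qed
    finally show ?thesis .
  qed
  define e where "e n = g n + of_real R * g (n + 1) + of_real R * g (n + k)" for n
  define h where "h n = scaleC (of_real R ^ n * e n) (vv a b n)" for n
  have cg: "cmod (g q) \<le> real M" for q by (simp add: g)
  have ce: "cmod (e n) \<le> real M * (1 + 2 * R)" for n
  proof -
    have "cmod (e n) \<le> cmod (g n) + R * cmod (g (n + 1)) + R * cmod (g (n + k))"
      unfolding e_def using R
      by (metis (no_types, opaque_lifting) norm_mult norm_of_real abs_of_nonneg order.trans
          norm_triangle_ineq add_mono order_refl zero_le_one)
    also have "\<dots> \<le> M + R * M + R * M"
      using R by (intro add_mono mult_left_mono cg) auto
    finally show ?thesis by (simp add: algebra_simps)
  qed
  have summ_gen: "summable (\<lambda>n. scaleC (of_real R ^ n * c n) (vv a b (n + m)))"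
    if "\<And>n. cmod (c n) \<le> C" for c C m
  proof (rule summable_comparison_test[where g="\<lambda>n. C * f (n + m) / R ^ m"])
    show "\<exists>N. \<forall>n\<ge>N. norm (scaleC (of_real R ^ n * c n) (vv a b (n + m))) \<le> C * f (n + m) / R ^ m"
    proof (intro exI allI impI)
      fix n
      have "norm (scaleC (of_real R ^ n * c n) (vv a b (n + m))) = R ^ n * cmod (c n) * norm (vv a b (n + m))"
        using R by (simp add: norm_scaleC norm_mult norm_power)
      also have "\<dots> \<le> R ^ n * C * norm (vv a b (n + m))"
        using R that[of n] by (intro mult_right_mono mult_left_mono) auto
      also have "\<dots> = C * f (n + m) / R ^ m"
        using R by (simp add: f_def power_add)
      finally show "norm (scaleC (of_real R ^ n * c n) (vv a b (n + m))) \<le> C * f (n + m) / R ^ m" .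
    qed
    have "summable (\<lambda>n. f (n + m))" using sf by (subst summable_iff_shift)
    thus "summable (\<lambda>n. C * f (n + m) / R ^ m)" by (intro summable_divide summable_mult)
  qed
  have sG: "summable (\<lambda>n. scaleC (of_real R ^ n * g (n + p)) (vv a b n))" for p
    using summ_gen[of "\<lambda>n. g (n + p)" M 0] cg by simp
  have sh: "summable h"
    unfolding h_def using summ_gen[of e "real M * (1 + 2 * R)" 0] ce by simp
  define F where "F = (\<Sum>j<M. scaleC (1 + of_real R * z ^ j + of_real R * z ^ (j * k)) (Phi (sj j)))"
  have F_G: "F = G 0 + scaleC (of_real R) (G 1) + scaleC (of_real R) (G k)"
    unfolding F_def G_def
    by (simp add: scaleC_sum_right sum.distrib scaleC_add_left scaleC_mult scaleC_one)
  define A where "A n = scaleC (of_real R ^ n * g n) (vv a b n)" for n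
  define B where "B n = scaleC (of_real R ^ n * (of_real R * g (n + 1))) (vv a b n)" for n
  define C where "C n = scaleC (of_real R ^ n * (of_real R * g (n + k))) (vv a b n)" for n
  have sA: "summable A" unfolding A_def using sG[of 0] by simp
  have sB: "summable B" unfolding B_def
    using summ_gen[of "\<lambda>n. of_real R * g (n + 1)" "R * M" 0] cg R
    by (simp add: norm_mult mult_left_mono)
  have sC: "summable C" unfolding C_def
    using summ_gen[of "\<lambda>n. of_real R * g (n + k)" "R * M" 0] cg R
    by (simp add: norm_mult mult_left_mono)
  have G0: "G 0 = suminf A" unfolding A_def G_eq by simp
  have G1: "scaleC (of_real R) (G 1) = suminf B"
    unfolding B_def G_eq[of 1] scaleC_suminf[OF sG[of 1]]
    by (intro suminf_cong) (simp add: scaleC_mult[symmetric] algebra_simps)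
  have Gk: "scaleC (of_real R) (G k) = suminf C"
    unfolding C_def G_eq[of k] scaleC_suminf[OF sG[of k]]
    by (intro suminf_cong) (simp add: scaleC_mult[symmetric] algebra_simps)
  have F_h: "F = suminf h"
  proof -
    have "(\<lambda>n. A n + B n + C n) sums (suminf A + suminf B + suminf C)"
      by (intro sums_add summable_sums sA sB sC)
    moreover have "(\<lambda>n. A n + B n + C n) = h"
      by (rule ext) (simp add: A_def B_def C_def h_def e_def scaleC_add_left[symmetric] algebra_simps)
    ultimately have "h sums (suminf A + suminf B + suminf C)" by simp
    thus ?thesis unfolding F_G G0 G1 Gk by (simp add: sums_iff)
  qed
  have split: "suminf h = (\<Sum>n. h (n + k)) + (\<Sum>i<k. h i)"
    by (rule suminf_split_initial_segment[OF sh])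
  have kk: "k = Suc (Suc N)" by (simp add: k_def M_def)
  have dv: "\<not> M dvd q" if "0 < q" "q < M" for q using that by (auto dest: dvd_imp_le)
  have e0: "e 0 = of_nat M"
    using dv[of 1] dv[of k] M3 by (simp add: e_def g k_def)
  have e1: "e 1 = of_real R * of_nat M"
    using dv[of 1] dv[of 2] M3 by (simp add: e_def g k_def numeral_2_eq_2)
  have ei: "e (Suc (Suc i)) = 0" if "i < N" for i
  proof -
    have "Suc (Suc i) + k = M + Suc i" using M3 by (simp add: k_def)
    moreover have "\<not> M dvd Suc i" using dv[of "Suc i"] that by (simp add: M_def)
    hence "\<not> M dvd (M + Suc i)" by (metis dvd_add_triv_left_iff)
    ultimately have "\<not> M dvd (Suc (Suc i) + k)" by metis
    moreover have "\<not> M dvd Suc (Suc i)" "\<not> M dvd (Suc (Suc i) + 1)"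
      using dv[of "Suc (Suc i)"] dv[of "Suc (Suc (Suc i))"] that by (auto simp: M_def)
    ultimately show ?thesis by (simp add: e_def g)
  qed
  have init: "(\<Sum>i<k. h i) = scaleC (of_nat M) (1 + scaleC (of_real (R^2)) (vv a b 1))"
  proof -
    have "(\<Sum>i<k. h i) = h 0 + h 1 + (\<Sum>i<N. h (Suc (Suc i)))"
      by (simp only: kk sum.lessThan_Suc_shift add.assoc One_nat_def)
    also have "(\<Sum>i<N. h (Suc (Suc i))) = 0"
      by (intro sum.neutral) (simp add: h_def ei)
    also have "h 0 + h 1 + 0 = scaleC (of_nat M) (1 + scaleC (of_real (R^2)) (vv a b 1))"
      by (simp add: h_def e0 e1[unfolded One_nat_def] vv_0 scaleC_add_right scaleC_mult[symmetric] scaleC_one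
          power2_eq_square algebra_simps)
    finally show ?thesis .
  qed
  have zM: "z ^ M = 1"
  proof -
    have "of_nat M * (2 * of_real pi * \<i> / of_nat M) = 2 * of_real pi * \<i>"
      using M3 by (simp add: field_simps)
    thus ?thesis unfolding z_def exp_of_nat_mult[symmetric] by simp
  qed
  have nz: "cmod z = 1" unfolding z_def by (simp add: norm_exp_eq_Re)
  have cj: "cnj (z ^ j) = z ^ (j * k)" for j
  proof -
    have "j + j * k = M * j" using M3 by (simp add: k_def algebra_simps)
    hence "z ^ j * z ^ (j * k) = z ^ (M * j)" by (metis power_add)
    also have "\<dots> = (z ^ M) ^ j" by (rule power_mult)
    finally have xy: "z ^ j * z ^ (j * k) = 1" by (simp add: zM)
    have "z ^ j * cnj (z ^ j) = of_real ((cmod (z ^ j))^2)"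
      by (rule complex_norm_square[symmetric])
    also have "\<dots> = 1" by (simp add: norm_power nz)
    finally have xc: "z ^ j * cnj (z ^ j) = 1" .
    have "cnj (z ^ j) = cnj (z ^ j) * (z ^ j * z ^ (j * k))" by (simp add: xy)
    also have "\<dots> = (z ^ j * cnj (z ^ j)) * z ^ (j * k)" by (simp add: algebra_simps)
    finally have "cnj (z ^ j) = z ^ j * cnj (z ^ j) * z ^ (j * k)" .
    thus ?thesis by (simp only: xc mult_1)
  qed
  have nsj: "cmod (sj j) = R" for j using R by (simp add: sj_def norm_mult norm_power nz)
  have normF: "norm F \<le> real M * (1 + 2 * R)"
  proof -
    have "norm F \<le> (\<Sum>j<M. norm (scaleC (1 + of_real R * z ^ j + of_real R * z ^ (j * k)) (Phi (sj j))))"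
      unfolding F_def by (rule norm_sum)
    also have "\<dots> \<le> (\<Sum>j<M. 1 + 2 * R)"
    proof (intro sum_mono)
      fix j
      have c: "1 + of_real R * z ^ j + of_real R * z ^ (j * k) = 1 + sj j + cnj (sj j)"
        using cj[of j] by (simp add: sj_def)
      have "norm (scaleC (1 + of_real R * z ^ j + of_real R * z ^ (j * k)) (Phi (sj j)))
          = cmod (1 + sj j + cnj (sj j)) * norm (Phi (sj j))" by (simp add: c norm_scaleC)
      also have "\<dots> \<le> cmod (1 + sj j) + cmod (sj j)" by (rule Phi_bound)
      also have "\<dots> \<le> 1 + 2 * R"
        using norm_triangle_ineq[of 1 "sj j"] nsj[of j] by simp
      finally show "norm (scaleC (1 + of_real R * z ^ j + of_real R * z ^ (j * k)) (Phi (sj j))) \<le> 1 + 2 * R" .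
    qed
    finally show ?thesis by simp
  qed
  have stail: "summable (\<lambda>n. f (n + k))" using sf by (subst summable_iff_shift)
  have bnd: "norm (h (n + k)) \<le> real M * (1 + 2 * R) * f (n + k)" for n
  proof -
    have "norm (h (n + k)) = cmod (e (n + k)) * (R ^ (n + k) * norm (vv a b (n + k)))"
      using R by (simp add: h_def norm_scaleC norm_mult norm_power)
    also have "\<dots> \<le> real M * (1 + 2 * R) * (R ^ (n + k) * norm (vv a b (n + k)))"
      using R by (intro mult_right_mono ce) auto
    finally show ?thesis by (simp add: f_def)
  qed
  have snh: "summable (\<lambda>n. norm (h (n + k)))"
    by (rule summable_comparison_test[OF _ summable_mult[OF stail]]) (use bnd in auto)
  have "norm (\<Sum>n. h (n + k)) \<le> (\<Sum>n. norm (h (n + k)))" by (rule summable_norm[OF snh])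
  also have "\<dots> \<le> (\<Sum>n. real M * (1 + 2 * R) * f (n + k))"
    by (rule suminf_le[OF bnd snh summable_mult[OF stail]])
  also have "\<dots> = real M * (1 + 2 * R) * (\<Sum>n. f (n + k))"
    by (rule suminf_mult[OF stail])
  also have "\<dots> \<le> real M * (1 + 2 * R) * 1"
  proof -
    have "(\<Sum>n. f (n + k)) \<le> norm (\<Sum>n. f (n + k))" by simp
    also have "\<dots> < 1" by (rule N[OF kN])
    finally show ?thesis using R by (intro mult_left_mono) auto
  qed
  finally have tail: "norm (\<Sum>n. h (n + k)) \<le> real M * (1 + 2 * R)" by simp
  have "scaleC (of_nat M) (1 + scaleC (of_real (R^2)) (vv a b 1)) = F - (\<Sum>n. h (n + k))"
    using F_h split init by simp
  hence "real M * norm (1 + scaleC (of_real (R^2)) (vv a b 1)) \<le> norm F + norm (\<Sum>n. h (n + k))"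
    by (metis norm_scaleC norm_of_nat norm_triangle_ineq4)
  also have "\<dots> \<le> real M * (2 * (2 * R + 1))" using normF tail by (simp add: algebra_simps)
  finally show ?thesis using M3 by simp
qed

lemma vv1_zero: "vv a b 1 = 0"
proof (rule ccontr)
  assume ne: "vv a b 1 \<noteq> 0"
  define V where "V = norm (vv a b 1)"
  have V: "V > 0" using ne by (simp add: V_def)
  define R where "R = 8 / V + 1"
  have R1: "R \<ge> 1" using V by (simp add: R_def)
  have "R^2 * V = norm (scaleC (of_real (R^2)) (vv a b 1))"
    by (simp add: norm_scaleC V_def norm_power)
  also have "\<dots> \<le> norm (1 + scaleC (of_real (R^2)) (vv a b 1)) + 1"
    using norm_triangle_ineq4[of "1 + scaleC (of_real (R^2)) (vv a b 1)" 1] by simp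
  also have "\<dots> \<le> 2 * (2 * R + 1) + 1" using key_bound[OF R1] by simp
  finally have "R^2 * V \<le> 4 * R + 3" by simp
  moreover have "R * V = 8 + V" using V by (simp add: R_def field_simps)
  moreover have "R^2 * V = R * (R * V)" by (simp add: power2_eq_square)
  ultimately have "R * (8 + V) \<le> 4 * R + 3" by simp
  moreover have "0 \<le> R * V" using R1 V by simp
  moreover have "R * (8 + V) = 8 * R + R * V" by (simp add: algebra_simps)
  ultimately show False using R1 by linarith
qed

end


theorem corollary3p2:
  fixes a b :: "'a::cstar_algebra"
  assumes "unitary a" and "unitary b"
  shows "a = b \<longleftrightarrow> rho a b = 0"
proof
  assume ab: "a = b"
  have C0: "Cab b b (Suc n) = 0" for n
    by (induction n) (simp_all add: Cab_Suc Cab_0)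
  have "(\<lambda>n. ereal (root n (norm (Cab a b n)))) = (\<lambda>n. ereal 0)"
  proof
    fix n show "ereal (root n (norm (Cab a b n))) = ereal 0"
      using ab C0 by (cases n) auto
  qed
  thus "rho a b = 0" unfolding rho_def by (simp add: Limsup_const)
next
  assume "rho a b = 0"
  hence "vv a b 1 = 0" using vv1_zero assms by blast
  hence ab1: "a * invol b = 1" using vv_1[OF assms(2), of a] by simp
  have "a = a * (invol b * b)" using assms(2) by (simp add: unitary_def)
  also have "\<dots> = b" by (simp add: mult.assoc[symmetric] ab1)
  finally show "a = b" .
qed

end
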